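(* Let $U\subset\mathbb R^m$ be open and assume (A1), (A2)–(A3) for all $u\in U$ and all unit $d$, (A4) at every $u\in U$, and condition (B) at every $u\in U$. Let $u_0\in U$ and $x_0\in S(u_0)$. Then the function $w:U\to\mathbb R$, $w(u)=f(x_0,u)$, is a viscosity subsolution at $u_0$ of $-\nabla w(u)\cdot d+\inf_{x\in S(u)}D_df_x(u)=0$ for every unit $d\in\mathbb R^m$, i.e. $-\eta\cdot d+\inf_{x\in S(u_0)}D_df_x(u_0)\le0$ for every $\eta\in\mathcal J^+w(u_0)$.
   Context: $\mathfrak X$ real Banach space, $X\subset\mathfrak X$ nonempty, $f:X\times U\to\mathbb R$, $\Phi:U\to2^X$, $v(u)=\inf_{x\in\Phi(u)}f(x,u)$, $S(u)=\{x\in\Phi(u):f(x,u)=v(u)\}$, $f_x(u)=f(x,u)$, $D_df_x(u)=\lim_{s\downarrow0}\frac{f(x,u+sd)-f(x,u)}{s}$. $\mathcal J^+w(u_0)=\{p\in\mathbb R^m:\limsup_{u\to u_0}\frac{w(u)-w(u_0)-p\cdot(u-u_0)}{|u-u_0|}\le0\}$. (A1): $f$ continuous and for each $u$ there exist $\alpha$, compact $C$ with $\emptyset\ne\{x\in\Phi(u'):f(x,u')\le\alpha\}\subset C$ for $u'$ near $u$. (A2) at $u$, $d$: $D_df_x(u)$ exists for $x\in\Phi(u)$ and $\inf_{x\in S(u)}D_df_x(u)>-\infty$. (A3) at $u$, $d$: $\{x_k\}\subset\Phi(u)$, $x_k\to x$ implies $D_df_x(u)\le\limsup_kD_df_{x_k}(u)$.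 (A4) at $u$: there exist $C_0>0$ and a neighborhood $\mathcal N$ of $u$ with $\inf_{x\in S(u_1)}D_df_x(u_1)>-C_0$ for $u_1\in\mathcal N$ and unit $d$. Condition (B): $\Phi$ constant equal to a nonempty closed subset of $X$, or $\Phi(u)=\{x\in X:G(x,u)\in K\}$ with $G$ continuous into a topological vector space, $K$ closed with nonempty interior, and $G(x,u)\in\operatorname{int}K$ for $x\in S(u)$. *)

theory Defs
  imports "HOL-Analysis.Analysis" "HOL-Library.Extended_Real"
begin

class real_tvs = real_vector + topological_space +
  assumes tvs_add_cont: "((\<lambda>p::'a \<times> 'a. fst p + snd p) \<longlongrightarrow> a + b) (nhds a \<times>\<^sub>F nhds b)"
  assumes tvs_scaleR_cont: "((\<lambda>p::real \<times> 'a. fst p *\<^sub>R snd p) \<longlongrightarrow> c *\<^sub>R a) (nhds c \<times>\<^sub>F nhds a)"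

definition optval :: "('x \<Rightarrow> 'u \<Rightarrow> real) \<Rightarrow> ('u \<Rightarrow> 'x set) \<Rightarrow> 'u \<Rightarrow> ereal" where
  "optval f \<Phi> u = (INF x\<in>\<Phi> u. ereal (f x u))"

definition optsol :: "('x \<Rightarrow> 'u \<Rightarrow> real) \<Rightarrow> ('u \<Rightarrow> 'x set) \<Rightarrow> 'u \<Rightarrow> 'x set" where
  "optsol f \<Phi> u = {x\<in>\<Phi> u. ereal (f x u) = optval f \<Phi> u}"

definition dquot :: "('x \<Rightarrow> 'u::real_normed_vector \<Rightarrow> real) \<Rightarrow> 'x \<Rightarrow> 'u \<Rightarrow> 'u \<Rightarrow> real \<Rightarrow> real" where
  "dquot f x u d s = (f x (u + s *\<^sub>R d) - f x u) / s"

definition dderiv_exists :: "('x \<Rightarrow> 'u::real_normed_vector \<Rightarrow> real) \<Rightarrow> 'x \<Rightarrow> 'u \<Rightarrow> 'u \<Rightarrow> bool" where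
  "dderiv_exists f x u d \<longleftrightarrow> (\<exists>L. (dquot f x u d \<longlongrightarrow> L) (at_right 0))"

definition dderiv :: "('x \<Rightarrow> 'u::real_normed_vector \<Rightarrow> real) \<Rightarrow> 'x \<Rightarrow> 'u \<Rightarrow> 'u \<Rightarrow> real" where
  "dderiv f x u d = Lim (at_right 0) (dquot f x u d)"

definition superdiff :: "(real^'m \<Rightarrow> real) \<Rightarrow> (real^'m) set \<Rightarrow> real^'m \<Rightarrow> (real^'m) set" where
  "superdiff w U u0 = {p. Limsup (at u0 within U)
      (\<lambda>u. ereal ((w u - w u0 - p \<bullet> (u - u0)) / norm (u - u0))) \<le> 0}"

end

theory Submission
  imports Defs
begin

theorem mainTheorem9:
  fixes X :: "'x::banach set"
    and U :: "(real^'m) set"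
    and f :: "'x \<Rightarrow> real^'m \<Rightarrow> real"
    and \<Phi> :: "real^'m \<Rightarrow> 'x set"
    and u0 :: "real^'m" and x0 :: 'x
  assumes X_ne: "X \<noteq> {}"
    and U_open: "open U"
    and Phi_sub: "\<forall>u\<in>U. \<Phi> u \<subseteq> X"
    \<comment> \<open>(A1)\<close>
    and A1_cont: "continuous_on (X \<times> U) (\<lambda>(x, u). f x u)"
    and A1_comp: "\<forall>u\<in>U. \<exists>\<alpha> C N. compact C \<and> open N \<and> u \<in> N \<and>
                    (\<forall>u'\<in>N \<inter> U. {x\<in>\<Phi> u'. f x u' \<le> \<alpha>} \<noteq> {} \<and> {x\<in>\<Phi> u'. f x u' \<le> \<alpha>} \<subseteq> C)"
    \<comment> \<open>(A2) for all u in U and unit d\<close>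
    and A2: "\<forall>u\<in>U. \<forall>d. norm d = 1 \<longrightarrow>
               (\<forall>x\<in>\<Phi> u. dderiv_exists f x u d) \<and>
               (INF x\<in>optsol f \<Phi> u. ereal (dderiv f x u d)) > -\<infinity>"
    \<comment> \<open>(A3) for all u in U and unit d\<close>
    and A3: "\<forall>u\<in>U. \<forall>d. norm d = 1 \<longrightarrow>
               (\<forall>xs x. (\<forall>k. xs k \<in> \<Phi> u) \<longrightarrow> x \<in> \<Phi> u \<longrightarrow> xs \<longlonglongrightarrow> x \<longrightarrow>
                  ereal (dderiv f x u d) \<le> limsup (\<lambda>k. ereal (dderiv f (xs k) u d)))"
    \<comment> \<open>(A4) at every u in U\<close>
    and A4: "\<forall>u\<in>U. \<exists>C0 N. C0 > 0 \<and> open N \<and> u \<in> N \<and> N \<subseteq> U \<and>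
               (\<forall>u1\<in>N. \<forall>d. norm d = 1 \<longrightarrow>
                  (INF x\<in>optsol f \<Phi> u1. ereal (dderiv f x u1 d)) > ereal (- C0))"
    \<comment> \<open>(B) at every u in U\<close>
    and B: "(\<exists>A. closed A \<and> A \<noteq> {} \<and> A \<subseteq> X \<and> (\<forall>u\<in>U. \<Phi> u = A)) \<or>
            (\<exists>(G :: 'x \<Rightarrow> real^'m \<Rightarrow> 'g::real_tvs) K.
               continuous_on (X \<times> U) (\<lambda>(x, u). G x u) \<and> closed K \<and> interior K \<noteq> {} \<and>
               (\<forall>u\<in>U. \<Phi> u = {x\<in>X. G x u \<in> K}) \<and>
               (\<forall>u\<in>U. \<forall>x\<in>optsol f \<Phi> u. G x u \<in> interior K))"
    and u0: "u0 \<in> U"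
    and x0: "x0 \<in> optsol f \<Phi> u0"
  shows "\<forall>d::real^'m. norm d = 1 \<longrightarrow>
           (\<forall>\<eta>\<in>superdiff (\<lambda>u. f x0 u) U u0.
              ereal (- (\<eta> \<bullet> d)) + (INF x\<in>optsol f \<Phi> u0. ereal (dderiv f x u0 d)) \<le> 0)"
proof (intro allI impI ballI)
  fix d :: "real^'m" and \<eta>
  assume nd: "norm d = 1" and eta: "\<eta> \<in> superdiff (\<lambda>u. f x0 u) U u0"
  have x0P: "x0 \<in> \<Phi> u0" using x0 unfolding optsol_def by auto
  obtain L where L: "(dquot f x0 u0 d \<longlongrightarrow> L) (at_right 0)"
    using A2 u0 nd x0P unfolding dderiv_exists_def by blast
  have dL: "dderiv f x0 u0 d = L" unfolding dderiv_def
    by (rule tendsto_Lim[OF _ L]) simp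
  define g where "g = (\<lambda>u. ereal ((f x0 u - f x0 u0 - \<eta> \<bullet> (u - u0)) / norm (u - u0)))"
  have ls: "Limsup (at u0 within U) g \<le> 0" using eta unfolding superdiff_def g_def by simp
  have lim1: "((\<lambda>s::real. u0 + s *\<^sub>R d) \<longlongrightarrow> u0) (at_right 0)"
    by (rule tendsto_eq_intros refl)+ simp
  have evU: "eventually (\<lambda>s::real. u0 + s *\<^sub>R d \<in> U) (at_right 0)"
    using topological_tendstoD[OF lim1 U_open u0] .
  have evne: "eventually (\<lambda>s::real. u0 + s *\<^sub>R d \<noteq> u0) (at_right 0)"
  proof (rule eventually_mono[OF eventually_at_right_less[of "0::real"]])
    fix s :: real assume "0 < s"
    moreover have "d \<noteq> 0" using nd by auto
    ultimately show "u0 + s *\<^sub>R d \<noteq> u0" by simp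
  qed
  have flim: "filterlim (\<lambda>s::real. u0 + s *\<^sub>R d) (at u0 within U) (at_right 0)"
    unfolding filterlim_at using eventually_conj[OF evU evne] lim1 by blast
  have key: "L \<le> \<eta> \<bullet> d + e" if e: "e > 0" for e
  proof -
    have "eventually (\<lambda>u. g u < ereal e) (at u0 within U)"
      by (rule Limsup_lessD, rule le_less_trans[OF ls]) (use e in simp)
    then have ev: "eventually (\<lambda>s. g (u0 + s *\<^sub>R d) < ereal e) (at_right (0::real))"
      by (rule eventually_compose_filterlim[OF _ flim])
    have "eventually (\<lambda>s. dquot f x0 u0 d s \<le> \<eta> \<bullet> d + e) (at_right (0::real))"
      using ev eventually_at_right_less[of "0::real"]
    proof (eventually_elim)
      case (elim s)
      have n: "norm (u0 + s *\<^sub>R d - u0) = s" using elim(2) nd by simp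
      have "(f x0 (u0 + s *\<^sub>R d) - f x0 u0 - \<eta> \<bullet> (u0 + s *\<^sub>R d - u0)) / s
            = dquot f x0 u0 d s - \<eta> \<bullet> d"
        using elim(2) by (simp add: dquot_def diff_divide_distrib)
      then have "g (u0 + s *\<^sub>R d) = ereal (dquot f x0 u0 d s - \<eta> \<bullet> d)"
        unfolding g_def n by simp
      then show ?case using elim(1) by simp
    qed
    then show ?thesis by (intro tendsto_upperbound[OF L]) simp_all
  qed
  have Lle: "L \<le> \<eta> \<bullet> d"
    using key by (meson field_le_epsilon add_le_cancel_left)
  have "(INF x\<in>optsol f \<Phi> u0. ereal (dderiv f x u0 d)) \<le> ereal (\<eta> \<bullet> d)"
    using x0 dL Lle by (meson INF_lower2 ereal_less_eq(3))
  then have "ereal (- (\<eta> \<bullet> d)) + (INF x\<in>optsol f \<Phi> u0. ereal (dderiv f x u0 d)) \<le> ereal (- (\<eta> \<bullet> d)) + ereal (\<eta> \<bullet> d)"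
    by (rule add_left_mono)
  then show "ereal (- (\<eta> \<bullet> d)) + (INF x\<in>optsol f \<Phi> u0. ereal (dderiv f x u0 d)) \<le> 0"
    by (simp add: zero_ereal_def)
qed

end
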